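(* Let $X$ be a $p\times 1$ random vector with finite moments up to the fourth order and invertible covariance matrix $\Sigma$, let $X_1,\dots,X_n$ be independent samples of $X$, let $\Omega$ be the normalized inverse covariance matrix of $X$ with eigenvalues $\lambda_1,\dots,\lambda_p$, and let $\hat\Omega$ be the sample normalized inverse covariance matrix. Assume that all expectations involved exist and that $\mathrm{E}[\hat\Omega]=\Omega$. For $\rho\in\mathbb{R}$ put $\Omega^*=(1-\rho)\hat\Omega+\rho I_p$. Then the value $\rho^*$ of $\rho$ minimizing $\mathrm{E}\big[\|\Omega^*-\Omega\|_F^2\big]$ is \[ \rho^*=\frac{\mathrm{tr}(\Sigma_{\hat\Omega})}{\mathrm{tr}(\Sigma_{\hat\Omega})+\mathrm{tr}(\Omega^2)-p}=\frac{\mathrm{tr}(\Sigma_{\hat\Omega})}{\mathrm{tr}(\Sigma_{\hat\Omega})+\sum_{i=1}^p\lambda_i^2-p}, \] where $\Sigma_{\hat\Omega}$ is the $p^2\times p^2$ covariance matrix of $\mathrm{vec}(\hat\Omega)$.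
   Context: For a random vector $X$ with covariance $\Sigma$ (invertible), $P=\Sigma^{-1}$, $P_d$ is the diagonal matrix with the diagonal entries of $P$, and the normalized inverse covariance matrix is $\Omega=P_d^{-1/2}PP_d^{-1/2}$. Given samples $X_1,\dots,X_n$, $\hat\Sigma=\frac1n\sum_{i=1}^n(X_i-\bar X)(X_i-\bar X)^T$ (assumed nonsingular), $\hat P=\hat\Sigma^{-1}$, $\hat P_d$ its diagonal part, and $\hat\Omega=\hat P_d^{-1/2}\hat P\hat P_d^{-1/2}$. $\mathrm{vec}(A)$ stacks the columns of $A$ into one vector. For a $p\times p$ matrix $A$, $\|A\|_F^2=\mathrm{tr}(A^TA)/p$ (scaled squared Frobenius norm). *)

theory Defs
  imports "HOL-Analysis.Analysis" "HOL-Probability.Probability" "HOL-Computational_Algebra.Polynomial"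
begin

definition mean_vec :: "'a measure \<Rightarrow> ('a \<Rightarrow> real^'k) \<Rightarrow> real^'k" where
  "mean_vec M Y = (\<chi> i. integral\<^sup>L M (\<lambda>w. Y w $ i))"

definition cov_mat :: "'a measure \<Rightarrow> ('a \<Rightarrow> real^'k) \<Rightarrow> real^'k^'k" where
  "cov_mat M Y = (\<chi> i j. integral\<^sup>L M (\<lambda>w. (Y w $ i - mean_vec M Y $ i) * (Y w $ j - mean_vec M Y $ j)))"

definition outer :: "real^'p \<Rightarrow> real^'p \<Rightarrow> real^'p^'p" where
  "outer u v = (\<chi> i j. u $ i * v $ j)"

definition sample_mean :: "nat \<Rightarrow> (nat \<Rightarrow> 'a \<Rightarrow> real^'p) \<Rightarrow> 'a \<Rightarrow> real^'p" where
  "sample_mean n Xs w = (1 / real n) *\<^sub>R (\<Sum>i\<in>{1..n}. Xs i w)"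

definition sample_cov :: "nat \<Rightarrow> (nat \<Rightarrow> 'a \<Rightarrow> real^'p) \<Rightarrow> 'a \<Rightarrow> real^'p^'p" where
  "sample_cov n Xs w = (1 / real n) *\<^sub>R
     (\<Sum>i\<in>{1..n}. outer (Xs i w - sample_mean n Xs w) (Xs i w - sample_mean n Xs w))"

definition diag_inv_sqrt :: "real^'p^'p \<Rightarrow> real^'p^'p" where
  "diag_inv_sqrt P = (\<chi> i j. if i = j then 1 / sqrt (P $ i $ i) else 0)"

definition norm_inv_cov :: "real^'p^'p \<Rightarrow> real^'p^'p" where
  "norm_inv_cov S = (let P = matrix_inv S in diag_inv_sqrt P ** P ** diag_inv_sqrt P)"

text \<open>vec: column stacking; the index (j,i) stands for row i, column j.\<close>
definition vecm :: "real^'p^'p \<Rightarrow> real^('p \<times> 'p)" where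
  "vecm A = (\<chi> k. A $ snd k $ fst k)"

definition fro2 :: "real^'p^'p \<Rightarrow> real" where
  "fro2 A = trace (transpose A ** A) / real CARD('p)"

definition charpoly :: "real^'p^'p \<Rightarrow> real poly" where
  "charpoly A = det (\<chi> i j. (if i = j then [:0, 1:] else 0) - [: A $ i $ j :])"

end

theory Submission
  imports Defs
begin

lemma matrix_inv_props:
  fixes S :: "real^'p^'p"
  assumes "invertible S"
  shows "S ** matrix_inv S = mat 1 \<and> matrix_inv S ** S = mat 1"
  using assms unfolding invertible_def matrix_inv_def by (rule someI_ex)

lemma matrix_inv_entry:
  fixes S :: "real^'p^'p"
  assumes inv: "invertible S"
  shows "matrix_inv S $ k $ j = det (\<chi> i l. if l = k then (if i = j then 1 else 0) else S $ i $ l) / det S"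
proof -
  let ?P = "matrix_inv S"
  let ?b = "(\<chi> i. if i = j then 1 else 0) :: real^'p"
  have d: "det S \<noteq> 0" using inv by (simp add: invertible_det_nz)
  have "S *v (?P *v ?b) = ?b"
    using matrix_inv_props[OF inv] by (simp add: matrix_vector_mul_assoc)
  then have "?P *v ?b = (\<chi> k. det (\<chi> i l. if l = k then ?b $ i else S $ i $ l) / det S)"
    using cramer[OF d] by blast
  then have "(?P *v ?b) $ k = det (\<chi> i l. if l = k then ?b $ i else S $ i $ l) / det S" by simp
  moreover have "(?P *v ?b) $ k = ?P $ k $ j"
    by (simp add: matrix_vector_mult_def if_distrib cong: if_cong)
  moreover have "(\<chi> i l. if l = k then ?b $ i else S $ i $ l) = (\<chi> i l. if l = k then (if i = j then 1 else 0) else S $ i $ l)"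
    by (simp add: vec_eq_iff)
  ultimately show ?thesis by metis
qed

lemma det_measurable:
  fixes F :: "'a \<Rightarrow> real^'p^'p"
  assumes "\<And>i j. (\<lambda>w. F w $ i $ j) \<in> borel_measurable M"
  shows "(\<lambda>w. det (F w)) \<in> borel_measurable M"
  unfolding det_def using assms by measurable

lemma mult_measurable:
  fixes F G :: "'a \<Rightarrow> real^'p^'p"
  assumes "\<And>i j. (\<lambda>w. F w $ i $ j) \<in> borel_measurable M"
    and "\<And>i j. (\<lambda>w. G w $ i $ j) \<in> borel_measurable M"
  shows "(\<lambda>w. (F w ** G w) $ i $ j) \<in> borel_measurable M"
  unfolding matrix_matrix_mult_def using assms by simp measurable

lemma inv_measurable:
  fixes F :: "'a \<Rightarrow> real^'p^'p"
  assumes "\<And>i j. (\<lambda>w. F w $ i $ j) \<in> borel_measurable M"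
    and "\<And>w. w \<in> space M \<Longrightarrow> invertible (F w)"
  shows "(\<lambda>w. matrix_inv (F w) $ i $ j) \<in> borel_measurable M"
proof -
  have m: "(\<lambda>w. det (\<chi> i' l. if l = i then (if i' = j then 1 else 0) else F w $ i' $ l) / det (F w)) \<in> borel_measurable M"
  proof (intro borel_measurable_divide det_measurable)
    fix i' l
    show "(\<lambda>w. (\<chi> i' l. if l = i then (if i' = j then 1 else 0) else F w $ i' $ l) $ i' $ l) \<in> borel_measurable M"
      by (cases "l = i"; cases "i' = j"; simp add: assms)
  qed (simp add: assms)
  show ?thesis
    by (rule measurable_cong[THEN iffD1, OF _ m]) (simp add: matrix_inv_entry assms(2))
qed

lemma nic_measurable:
  fixes F :: "'a \<Rightarrow> real^'p^'p"
  assumes "\<And>i j. (\<lambda>w. F w $ i $ j) \<in> borel_measurable M"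
    and "\<And>w. w \<in> space M \<Longrightarrow> invertible (F w)"
  shows "(\<lambda>w. norm_inv_cov (F w) $ i $ j) \<in> borel_measurable M"
proof -
  have P: "\<And>i j. (\<lambda>w. matrix_inv (F w) $ i $ j) \<in> borel_measurable M"
    using inv_measurable[OF assms] .
  have D: "\<And>i j. (\<lambda>w. diag_inv_sqrt (matrix_inv (F w)) $ i $ j) \<in> borel_measurable M"
    unfolding diag_inv_sqrt_def using P by simp measurable
  show ?thesis unfolding norm_inv_cov_def Let_def
    by (intro mult_measurable D P)
qed

lemma sample_cov_measurable:
  fixes Xs :: "nat \<Rightarrow> 'a \<Rightarrow> real^'p"
  assumes "\<forall>k\<in>{1..n}. Xs k \<in> borel_measurable M"
  shows "(\<lambda>w. sample_cov n Xs w $ i $ j) \<in> borel_measurable M"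
proof -
  have c: "\<And>k i. k \<in> {1..n} \<Longrightarrow> (\<lambda>w. Xs k w $ i) \<in> borel_measurable M"
    using assms by (auto intro: measurable_compose[OF _ borel_measurable_nth])
  show ?thesis
    unfolding sample_cov_def sample_mean_def outer_def
    apply (simp add: sum_component)
    apply (intro borel_measurable_divide borel_measurable_sum borel_measurable_times borel_measurable_diff borel_measurable_const)
    using c by auto
qed

lemma sq_integrable_imp:
  fixes f :: "'a \<Rightarrow> real"
  assumes "prob_space M" "f \<in> borel_measurable M" "integrable M (\<lambda>w. (f w)^2)"
  shows "integrable M f"
proof -
  interpret prob_space M by fact
  have i1: "integrable M (\<lambda>w. 1 + (f w)^2)" using assms by simp
  have nb: "\<bar>f w\<bar> \<le> 1 + (f w)^2" for w
  proof -
    have h: "0 \<le> (\<bar>f w\<bar> - 1)^2" by simp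
    have e: "(\<bar>f w\<bar> - 1)^2 = (f w)^2 - 2 * \<bar>f w\<bar> + 1"
      by (simp add: power2_diff power2_abs)
    show ?thesis using h e abs_ge_zero[of "f w"] by linarith
  qed
  show ?thesis by (rule Bochner_Integration.integrable_bound[OF i1 assms(2)]) (auto intro!: AE_I2 simp: nb)
qed

lemma trace_cov_vecm:
  fixes F :: "'a \<Rightarrow> real^'p^'p"
  assumes mean: "\<And>i j. integral\<^sup>L M (\<lambda>w. F w $ i $ j) = Om $ i $ j"
  shows "trace (cov_mat M (\<lambda>w. vecm (F w))) = (\<Sum>i\<in>UNIV. \<Sum>k\<in>UNIV. integral\<^sup>L M (\<lambda>w. (F w $ k $ i - Om $ k $ i)^2))"
proof -
  have "trace (cov_mat M (\<lambda>w. vecm (F w))) = (\<Sum>q\<in>UNIV. integral\<^sup>L M (\<lambda>w. (F w $ snd q $ fst q - Om $ snd q $ fst q)^2))"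
    unfolding trace_def cov_mat_def mean_vec_def vecm_def by (simp add: mean power2_eq_square)
  also have "\<dots> = (\<Sum>q\<in>UNIV \<times> UNIV. integral\<^sup>L M (\<lambda>w. (F w $ snd q $ fst q - Om $ snd q $ fst q)^2))"
    by simp
  also have "\<dots> = (\<Sum>(i,k)\<in>UNIV \<times> UNIV. integral\<^sup>L M (\<lambda>w. (F w $ k $ i - Om $ k $ i)^2))"
    by (rule sum.cong) auto
  also have "\<dots> = (\<Sum>i\<in>UNIV. \<Sum>k\<in>UNIV. integral\<^sup>L M (\<lambda>w. (F w $ k $ i - Om $ k $ i)^2))"
    by (rule sum.cartesian_product[symmetric])
  finally show ?thesis .
qed

lemma coeff_prod_linear_aux:
  fixes a :: "'i \<Rightarrow> real"
  assumes "finite S"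
  shows "coeff (\<Prod>i\<in>S. [:-a i, 1:]) (card S) = 1 \<and> degree (\<Prod>i\<in>S. [:-a i, 1:]) \<le> card S
     \<and> (S \<noteq> {} \<longrightarrow> coeff (\<Prod>i\<in>S. [:-a i, 1:]) (card S - 1) = - (\<Sum>i\<in>S. a i))"
  using assms
proof (induction S rule: finite_induct)
  case empty
  then show ?case by simp
next
  case (insert x F)
  let ?q = "\<Prod>i\<in>F. [:-a i, 1:]"
  have IH1: "coeff ?q (card F) = 1" and IH2: "degree ?q \<le> card F"
    and IH3: "F \<noteq> {} \<Longrightarrow> coeff ?q (card F - 1) = - (\<Sum>i\<in>F. a i)"
    using insert.IH by blast+
  have e: "(\<Prod>i\<in>insert x F. [:-a i, 1:]) = smult (- a x) ?q + pCons 0 ?q"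
  proof -
    have "(\<Prod>i\<in>insert x F. [:-a i, 1:]) = [:-a x, 1:] * ?q"
      using insert.hyps by (rule prod.insert)
    also have "\<dots> = smult (- a x) ?q + pCons 0 ?q"
      by (simp only: mult_pCons_left pCons_0_0 smult_0_left add_0_right one_pCons mult_1)
        (simp add: pCons_one)
    finally show ?thesis .
  qed
  have c: "card (insert x F) = Suc (card F)" using insert.hyps by simp
  have d0: "coeff ?q (Suc (card F)) = 0"
    using IH2 by (intro coeff_eq_0) simp
  have A: "coeff (\<Prod>i\<in>insert x F. [:-a i, 1:]) (card (insert x F)) = 1"
    unfolding e c coeff_add coeff_smult coeff_pCons_Suc d0 IH1 by simp
  have B: "degree (\<Prod>i\<in>insert x F. [:-a i, 1:]) \<le> card (insert x F)"
  proof -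
    have "degree (smult (- a x) ?q) \<le> Suc (card F)"
      using degree_smult_le[of "- a x" ?q] IH2 by linarith
    moreover have "degree (pCons 0 ?q) \<le> Suc (card F)"
      using degree_pCons_le[of 0 ?q] IH2 by linarith
    ultimately show ?thesis unfolding e c by (rule degree_add_le)
  qed
  have C: "coeff (\<Prod>i\<in>insert x F. [:-a i, 1:]) (card (insert x F) - 1) = - (\<Sum>i\<in>insert x F. a i)"
  proof (cases "F = {}")
    case True
    then show ?thesis by simp
  next
    case False
    then have "card F \<ge> 1" using insert.hyps by (simp add: Suc_leI card_gt_0_iff)
    then obtain m where m: "card F = Suc m" by (cases "card F") auto
    have i3: "coeff ?q m = - (\<Sum>i\<in>F. a i)" using IH3[OF False] m by simp
    have i1: "coeff ?q (Suc m) = 1" using IH1 m by simp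
    have "coeff (\<Prod>i\<in>insert x F. [:-a i, 1:]) (card (insert x F) - 1)
        = - a x * coeff ?q (Suc m) + coeff ?q m"
      unfolding e c m by (simp only: diff_Suc_1 coeff_add coeff_smult coeff_pCons_Suc)
    also have "\<dots> = - (\<Sum>i\<in>insert x F. a i)"
      unfolding i1 i3 using insert.hyps by simp
    finally show ?thesis .
  qed
  show ?case using A B C by blast
qed

lemma coeff_charpoly:
  fixes B :: "real^'p^'p"
  shows "coeff (charpoly B) (CARD('p) - 1) = - trace B"
proof -
  let ?M = "(\<chi> i j. (if i = j then [:0, 1:] else 0) - [: B $ i $ j :]) :: real poly^'p^'p"
  let ?t = "\<lambda>p. of_int (sign p) * prod (\<lambda>i. ?M$i$p i) (UNIV :: 'p set)"
  let ?P = "{p. p permutes (UNIV :: 'p set)}"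
  have fin: "finite ?P" by (simp add: finite_permutations)
  have idP: "id \<in> ?P" by (simp add: permutes_id)
  have "charpoly B = sum ?t ?P" unfolding charpoly_def det_def by simp
  also have "\<dots> = ?t id + sum ?t (?P - {id})"
    by (rule sum.remove[OF fin idP])
  finally have cp: "charpoly B = ?t id + sum ?t (?P - {id})" .
  have tid: "?t id = (\<Prod>i\<in>UNIV. [:-(B$i$i), 1:])"
    by (simp add: sign_id)
  have c1: "coeff (?t id) (CARD('p) - 1) = - trace B"
    unfolding tid trace_def using coeff_prod_linear_aux[of "UNIV::'p set" "\<lambda>i. B$i$i"] by simp
  have c2: "coeff (?t p) (CARD('p) - 1) = 0" if p: "p \<in> ?P - {id}" for p
  proof -
    from p have pp: "p permutes UNIV" and pn: "p \<noteq> id" by auto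
    then obtain i where i: "p i \<noteq> i" by (metis eq_id_iff)
    let ?j = "p i"
    have j: "p ?j \<noteq> ?j"
      using i permutes_inj[OF pp] by (metis injD)
    have sub: "{k. p k = k} \<subseteq> UNIV - {i, ?j}" using i j by auto
    have "card {k. p k = k} \<le> card (UNIV - {i, ?j} :: 'p set)"
      by (rule card_mono[OF _ sub]) simp
    also have "\<dots> = CARD('p) - 2" using i by (simp add: card_Diff_subset)
    finally have cf: "card {k. p k = k} \<le> CARD('p) - 2" .
    have ge2: "CARD('p) \<ge> 2"
    proof -
      have "card {i, ?j} \<le> CARD('p)" by (rule card_mono) auto
      then show ?thesis using i by simp
    qed
    have "degree (?t p) \<le> degree (prod (\<lambda>i. ?M$i$p i) (UNIV :: 'p set))"
      using degree_mult_le[of "of_int (sign p)" "prod (\<lambda>i. ?M$i$p i) (UNIV :: 'p set)"]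
      by (simp only: degree_of_int add_0)
    also have "\<dots> \<le> sum (degree \<circ> (\<lambda>i. ?M$i$p i)) UNIV"
      by (rule degree_prod_sum_le) simp
    also have "\<dots> = sum (\<lambda>k. if p k = k then 1 else 0) UNIV"
    proof (rule sum.cong[OF refl])
      fix k :: 'p
      show "(degree \<circ> (\<lambda>i. ?M$i$p i)) k = (if p k = k then 1 else 0)"
        by (cases "p k = k") simp_all
    qed
    also have "\<dots> = card {k. p k = k}"
      by (simp add: sum.If_cases)
    finally have "degree (?t p) < CARD('p) - 1" using cf ge2 by linarith
    then show ?thesis by (simp add: coeff_eq_0)
  qed
  show ?thesis unfolding cp coeff_add coeff_sum using c1 c2 by simp
qed

lemma poly_charpoly:
  fixes B :: "real^'p^'p"
  shows "poly (charpoly B) t = det (mat t - B)"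
  unfolding charpoly_def det_def poly_sum poly_mult poly_prod
  by (rule sum.cong) (auto simp: mat_def intro!: prod.cong)

lemma det_neg_mat:
  fixes B :: "real^'p^'p"
  shows "det (- B) = (-1) ^ CARD('p) * det B"
proof -
  have "(- B) = (\<chi> i. (-1::real) *s (B $ i))" by (simp add: vec_eq_iff)
  then show ?thesis using det_rows_mul[of "\<lambda>_. -1::real" "\<lambda>i. B $ i"]
    by simp
qed

lemma mat_left_sub:
  fixes A B :: "real^'p^'p"
  shows "(mat t - A) ** B = t *\<^sub>R B - A ** B"
proof -
  have "((mat t - A) ** B) $ i $ j = (t *\<^sub>R B - A ** B) $ i $ j" for i j
  proof -
    have "((mat t - A) ** B) $ i $ j = (\<Sum>k\<in>UNIV. (if i = k then t * B $ k $ j else 0) - A $ i $ k * B $ k $ j)"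
      by (simp add: matrix_matrix_mult_def mat_def left_diff_distrib; rule sum.cong; simp)
    also have "\<dots> = t * B $ i $ j - (A ** B) $ i $ j"
      by (simp add: sum_subtractf matrix_matrix_mult_def)
    finally show ?thesis by simp
  qed
  then show ?thesis by (simp add: vec_eq_iff)
qed

lemma mat_sq_identity:
  fixes A :: "real^'p^'p"
  shows "(mat t - A) ** (mat t + A) = mat (t * t) - A ** A"
proof -
  have "(mat t - A) ** (mat t + A) = t *\<^sub>R (mat t + A) - A ** (mat t + A)"
    by (rule mat_left_sub)
  also have "A ** (mat t + A) = A ** mat t + A ** A" by (rule matrix_add_ldistrib)
  also have "A ** mat t = t *\<^sub>R A"
    by (simp add: vec_eq_iff matrix_matrix_mult_def mat_def if_distrib cong: if_cong)
  finally show ?thesis by (simp add: vec_eq_iff mat_def algebra_simps)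
qed

lemma sum_sq_eigen:
  fixes A :: "real^'p^'p" and lam :: "'p \<Rightarrow> real"
  assumes cp: "charpoly A = (\<Prod>i\<in>UNIV. [: - lam i, 1 :])"
  shows "trace (A ** A) = (\<Sum>i\<in>UNIV. (lam i)^2)"
proof -
  have dA: "det (mat t - A) = (\<Prod>i\<in>UNIV. t - lam i)" for t
    using arg_cong[OF cp, of "\<lambda>q. poly q t"] by (simp add: poly_charpoly poly_prod)
  have dA2: "det (mat t + A) = (\<Prod>i\<in>UNIV. t + lam i)" for t
  proof -
    have "mat t + A = - (mat (-t) - A)" by (simp add: vec_eq_iff mat_def)
    then have "det (mat t + A) = det (- (mat (-t) - A))" by simp
    also have "\<dots> = (-1) ^ CARD('p) * det (mat (-t) - A)" by (rule det_neg_mat)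
    finally have "det (mat t + A) = (-1) ^ CARD('p) * (\<Prod>i\<in>UNIV. - t - lam i)"
      by (simp add: dA)
    also have "(\<Prod>i\<in>UNIV. - t - lam i) = (\<Prod>i\<in>UNIV. (-1) * (t + lam i))"
      by (rule prod.cong) auto
    also have "\<dots> = (-1) ^ CARD('p) * (\<Prod>i\<in>UNIV. t + lam i)"
      unfolding prod.distrib by simp
    finally show ?thesis by (simp add: power_mult_distrib[symmetric] mult.assoc[symmetric])
  qed
  have ev: "poly (charpoly (A ** A)) s = poly (\<Prod>i\<in>UNIV. [: - ((lam i)^2), 1 :]) s" if "s \<ge> 0" for s
  proof -
    define t where "t = sqrt s"
    have s: "s = t * t" using that by (simp add: t_def)
    have "poly (charpoly (A ** A)) s = det ((mat t - A) ** (mat t + A))"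
      by (simp add: poly_charpoly mat_sq_identity s)
    also have "\<dots> = (\<Prod>i\<in>UNIV. t - lam i) * (\<Prod>i\<in>UNIV. t + lam i)"
      by (simp add: det_mul dA dA2)
    also have "\<dots> = (\<Prod>i\<in>UNIV. s - (lam i)^2)"
      by (simp add: prod.distrib[symmetric] s power2_eq_square algebra_simps)
    finally show ?thesis by (simp add: poly_prod)
  qed
  have eq: "charpoly (A ** A) = (\<Prod>i\<in>UNIV. [: - ((lam i)^2), 1 :])"
  proof (rule ccontr)
    assume ne: "charpoly (A ** A) \<noteq> (\<Prod>i\<in>UNIV. [: - ((lam i)^2), 1 :])"
    let ?d = "charpoly (A ** A) - (\<Prod>i\<in>UNIV. [: - ((lam i)^2), 1 :])"
    have "?d \<noteq> 0" using ne by simp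
    then have "finite {x. poly ?d x = 0}" by (rule poly_roots_finite)
    moreover have "{0..} \<subseteq> {x. poly ?d x = 0}" using ev by auto
    ultimately have "finite {0::real..}" by (rule finite_subset[rotated])
    then show False using infinite_Ici[of "0::real"] by simp
  qed
  have "- trace (A ** A) = coeff (charpoly (A ** A)) (CARD('p) - 1)"
    by (rule coeff_charpoly[symmetric])
  also have "\<dots> = - (\<Sum>i\<in>UNIV. (lam i)^2)"
    unfolding eq using coeff_prod_linear_aux[of "UNIV::'p set" "\<lambda>i. (lam i)^2"] by simp
  finally show ?thesis by simp
qed

lemma exp_fro:
  fixes F :: "'a \<Rightarrow> real^'p^'p" and Om :: "real^'p^'p"
  assumes P: "prob_space M"
    and m: "\<And>i j. (\<lambda>w. F w $ i $ j) \<in> borel_measurable M"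
    and sq: "\<And>i j. integrable M (\<lambda>w. (F w $ i $ j)^2)"
    and mean: "\<And>i j. integral\<^sup>L M (\<lambda>w. F w $ i $ j) = Om $ i $ j"
  shows "integral\<^sup>L M (\<lambda>w. fro2 ((1 - \<rho>) *\<^sub>R F w + \<rho> *\<^sub>R mat 1 - Om))
     = ((1 - \<rho>)^2 * trace (cov_mat M (\<lambda>w. vecm (F w)))
        + \<rho>^2 * (\<Sum>i\<in>UNIV. \<Sum>k\<in>UNIV. ((mat 1 - Om) $ k $ i)^2)) / real CARD('p)"
proof -
  interpret prob_space M by fact
  define C where "C i k = (mat 1 - Om) $ k $ i" for i k
  define g where "g i k w = (1 - \<rho>)^2 * (F w $ k $ i - Om $ k $ i)^2
      + 2 * (1 - \<rho>) * \<rho> * C i k * (F w $ k $ i - Om $ k $ i) + \<rho>^2 * (C i k)^2" for i k w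
  have intF: "integrable M (\<lambda>w. F w $ k $ i)" for i k
    using sq_integrable_imp[OF P m sq] .
  have intD2: "integrable M (\<lambda>w. (F w $ k $ i - Om $ k $ i)^2)" for i k
    unfolding power2_diff
    apply (rule Bochner_Integration.integrable_diff)
     apply (rule Bochner_Integration.integrable_add)
      apply (rule sq)
     apply (rule integrable_const)
    apply (rule integrable_mult_left)
    apply (rule integrable_mult_right)
    apply (rule intF)
    done
  have intg: "integrable M (g i k)" for i k
    unfolding g_def using intF intD2 by (intro Bochner_Integration.integrable_add Bochner_Integration.integrable_mult_right) (auto intro: Bochner_Integration.integrable_diff)
  have ig: "integral\<^sup>L M (g i k) = (1 - \<rho>)^2 * integral\<^sup>L M (\<lambda>w. (F w $ k $ i - Om $ k $ i)^2) + \<rho>^2 * (C i k)^2" for i k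
  proof -
    have "integral\<^sup>L M (\<lambda>w. F w $ k $ i - Om $ k $ i) = 0"
      using intF by (simp add: mean prob_space)
    then show ?thesis unfolding g_def using intF intD2
      by (simp add: prob_space Bochner_Integration.integral_add Bochner_Integration.integral_diff Bochner_Integration.integrable_add Bochner_Integration.integrable_diff)
  qed
  have ent: "fro2 ((1 - \<rho>) *\<^sub>R F w + \<rho> *\<^sub>R mat 1 - Om) = (\<Sum>i\<in>UNIV. \<Sum>k\<in>UNIV. g i k w) / real CARD('p)" for w
  proof -
    have "((1 - \<rho>) * F w $ k $ i + \<rho> * mat 1 $ k $ i - Om $ k $ i) * ((1 - \<rho>) * F w $ k $ i + \<rho> * mat 1 $ k $ i - Om $ k $ i)
      = g i k w" for i k
      unfolding g_def C_def by (simp add: power2_eq_square algebra_simps)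
    then show ?thesis
      unfolding fro2_def trace_def matrix_matrix_mult_def transpose_def by simp
  qed
  have "integral\<^sup>L M (\<lambda>w. fro2 ((1 - \<rho>) *\<^sub>R F w + \<rho> *\<^sub>R mat 1 - Om))
      = integral\<^sup>L M (\<lambda>w. (\<Sum>i\<in>UNIV. \<Sum>k\<in>UNIV. g i k w)) / real CARD('p)"
    unfolding ent by simp
  also have "integral\<^sup>L M (\<lambda>w. (\<Sum>i\<in>UNIV. \<Sum>k\<in>UNIV. g i k w)) = (\<Sum>i\<in>UNIV. \<Sum>k\<in>UNIV. integral\<^sup>L M (g i k))"
    using intg by (simp add: Bochner_Integration.integral_sum Bochner_Integration.integrable_sum)
  also have "\<dots> = (1 - \<rho>)^2 * (\<Sum>i\<in>UNIV. \<Sum>k\<in>UNIV. integral\<^sup>L M (\<lambda>w. (F w $ k $ i - Om $ k $ i)^2))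
       + \<rho>^2 * (\<Sum>i\<in>UNIV. \<Sum>k\<in>UNIV. (C i k)^2)"
    by (simp add: ig sum.distrib sum_distrib_left)
  finally show ?thesis using trace_cov_vecm[of M F Om, OF mean] by (simp add: C_def)
qed

lemma sum_delta_mult_l:
  fixes f :: "'p::finite \<Rightarrow> real"
  shows "(\<Sum>k\<in>UNIV. (if i = k then c else 0) * f k) = c * f i"
proof -
  have "(\<Sum>k\<in>UNIV. (if i = k then c else 0) * f k) = (\<Sum>k\<in>UNIV. if i = k then c * f k else 0)"
    by (rule sum.cong) auto
  then show ?thesis by simp
qed

lemma sum_delta_mult_r:
  fixes f :: "'p::finite \<Rightarrow> real"
  shows "(\<Sum>k\<in>UNIV. f k * (if k = j then c else 0)) = f j * c"
proof -
  have "(\<Sum>k\<in>UNIV. f k * (if k = j then c else 0)) = (\<Sum>k\<in>UNIV. if k = j then f k * c else 0)"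
    by (rule sum.cong) auto
  then show ?thesis by simp
qed

lemma sum_delta_mult_r':
  fixes f a :: "'p::finite \<Rightarrow> real"
  shows "(\<Sum>k\<in>UNIV. f k * (if k = j then a k else 0)) = f j * a j"
proof -
  have "(\<Sum>k\<in>UNIV. f k * (if k = j then a k else 0)) = (\<Sum>k\<in>UNIV. if k = j then f k * a k else 0)"
    by (rule sum.cong) auto
  then show ?thesis by simp
qed

lemma mult_diag_left:
  fixes A P :: "real^'p^'p"
  shows "(diag_inv_sqrt P ** A) $ i $ k = A $ i $ k / sqrt (P $ i $ i)"
  unfolding matrix_matrix_mult_def diag_inv_sqrt_def by (simp add: sum_delta_mult_l)

lemma mult_diag_right:
  fixes A P :: "real^'p^'p"
  shows "(A ** diag_inv_sqrt P) $ i $ j = A $ i $ j / sqrt (P $ j $ j)"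
  unfolding matrix_matrix_mult_def diag_inv_sqrt_def by (simp add: sum_delta_mult_r')

lemma nic_entry:
  fixes S :: "real^'p^'p"
  shows "norm_inv_cov S $ i $ j = matrix_inv S $ i $ j / (sqrt (matrix_inv S $ i $ i) * sqrt (matrix_inv S $ j $ j))"
  unfolding norm_inv_cov_def Let_def by (simp add: mult_diag_right mult_diag_left)

lemma psd_pd:
  fixes S :: "real^'p^'p"
  assumes sym: "transpose S = S" and psd: "\<And>v. 0 \<le> v \<bullet> (S *v v)"
    and z: "u \<bullet> (S *v u) = 0"
  shows "S *v u = 0"
proof (rule ccontr)
  assume nz: "S *v u \<noteq> 0"
  define w where "w = S *v u"
  have symm: "x \<bullet> (S *v y) = (S *v x) \<bullet> y" for x y
  proof -
    have "x \<bullet> (S *v y) = (x v* S) \<bullet> y" by (rule dot_lmul_matrix[symmetric])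
    also have "x v* S = transpose S *v x" by simp
    finally show ?thesis using sym by simp
  qed
  define b where "b = w \<bullet> w"
  define c where "c = w \<bullet> (S *v w)"
  have bpos: "b > 0" using nz unfolding b_def w_def by simp
  have c0: "c \<ge> 0" unfolding c_def by (rule psd)
  have uw: "u \<bullet> (S *v w) = b" unfolding b_def using symm[of u w] by (simp add: w_def)
  have wu: "w \<bullet> (S *v u) = b" unfolding b_def by (simp add: w_def)
  define t where "t = b / (c + 1)"
  have Sv: "S *v (u - t *\<^sub>R w) = S *v u - t *\<^sub>R (S *v w)"
    by (simp only: matrix_vector_mult_diff_distrib matrix_vector_mult_scaleR)
  have "(u - t *\<^sub>R w) \<bullet> (S *v (u - t *\<^sub>R w)) = u \<bullet> (S *v u) - t * (u \<bullet> (S *v w)) - t * (w \<bullet> (S *v u)) + t * t * c"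
    unfolding Sv c_def
    by (simp only: inner_diff_left inner_diff_right inner_scaleR_left inner_scaleR_right) (simp add: algebra_simps)
  also have "\<dots> = - 2 * (t * b) + t * (t * c)" using z uw wu by simp
  also have "\<dots> < 0"
  proof -
    have tpos: "t > 0" unfolding t_def using bpos c0 by simp
    have "t * c = b * (c / (c + 1))" unfolding t_def by simp
    also have "\<dots> \<le> b * 1" using bpos c0 by (intro mult_left_mono) auto
    finally have "t * c \<le> b" by simp
    then have "t * (t * c) \<le> t * b" using tpos by (intro mult_left_mono) auto
    moreover have "t * b > 0" using tpos bpos by (rule mult_pos_pos)
    ultimately show ?thesis by linarith
  qed
  finally show False using psd[of "u - t *\<^sub>R w"] by simp
qed

lemma nic_props:
  fixes S :: "real^'p^'p"
  assumes sym: "transpose S = S" and psd: "\<And>v. 0 \<le> v \<bullet> (S *v v)"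
    and inv: "invertible S"
  shows "transpose (norm_inv_cov S) = norm_inv_cov S" and "\<And>i. norm_inv_cov S $ i $ i = 1"
proof -
  let ?P = "matrix_inv S"
  have SP: "S ** ?P = mat 1" and PS: "?P ** S = mat 1" using matrix_inv_props[OF inv] by auto
  have "transpose (?P ** S) = mat 1" using PS by (simp add: transpose_mat)
  then have SPt: "S ** transpose ?P = mat 1" by (simp add: matrix_transpose_mul sym)
  have Psym: "transpose ?P = ?P"
  proof -
    have "?P = ?P ** (S ** transpose ?P)" by (simp add: SPt)
    also have "\<dots> = transpose ?P" by (simp add: matrix_mul_assoc PS)
    finally show ?thesis by simp
  qed
  have Pij: "?P $ i $ j = ?P $ j $ i" for i j
  proof -
    have "transpose ?P $ i $ j = ?P $ i $ j" using Psym by simp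
    then show ?thesis by (simp add: transpose_def)
  qed
  have Ppos: "?P $ i $ i > 0" for i
  proof -
    define e where "e = (axis i 1 :: real^'p)"
    define u where "u = ?P *v e"
    have Su: "S *v u = e" unfolding u_def by (simp add: matrix_vector_mul_assoc SP)
    have ui: "u $ i = ?P $ i $ i"
      unfolding u_def e_def by (simp add: matrix_vector_mult_def axis_def if_distrib cong: if_cong)
    have q: "u \<bullet> (S *v u) = ?P $ i $ i"
      unfolding Su e_def using ui by (simp add: inner_axis)
    have "?P $ i $ i \<ge> 0" using psd[of u] q by simp
    moreover have "?P $ i $ i \<noteq> 0"
    proof
      assume "?P $ i $ i = 0"
      then have "S *v u = 0" using psd_pd[OF sym psd] q by simp
      then show False using Su unfolding e_def by (simp add: axis_eq_0_iff)
    qed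
    ultimately show ?thesis by simp
  qed
  have Oij: "norm_inv_cov S $ j $ i = norm_inv_cov S $ i $ j" for i j
    unfolding nic_entry Pij[of j i] by (simp add: mult.commute)
  show "transpose (norm_inv_cov S) = norm_inv_cov S"
    by (simp add: vec_eq_iff transpose_def Oij)
  show "norm_inv_cov S $ i $ i = 1" for i
    using Ppos[of i] by (simp add: nic_entry)
qed

lemma T_eq:
  fixes O' :: "real^'p^'p"
  assumes sym: "transpose O' = O'" and d: "\<And>i. O' $ i $ i = 1"
  shows "(\<Sum>i\<in>UNIV. \<Sum>k\<in>UNIV. ((mat 1 - O') $ k $ i)^2) = trace (O' ** O') - real CARD('p)"
proof -
  have s: "O' $ k $ i = O' $ i $ k" for i k
  proof -
    have "transpose O' $ k $ i = O' $ k $ i" using sym by simp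
    then show ?thesis by (simp add: transpose_def)
  qed
  have "((mat 1 - O') $ k $ i)^2 = (O' $ k $ i)^2 - (if (k::'p) = i then 1 else 0)" for i k
    using d[of i] by (cases "k = i") (auto simp: mat_def power2_eq_square algebra_simps)
  then have "(\<Sum>i\<in>UNIV. \<Sum>k\<in>UNIV. ((mat 1 - O') $ k $ i)^2)
      = (\<Sum>i\<in>UNIV. \<Sum>k\<in>UNIV. (O' $ k $ i)^2 - (if (k::'p) = i then 1 else 0))"
    by presburger
  also have "\<dots> = (\<Sum>i\<in>UNIV. \<Sum>k\<in>UNIV. (O' $ k $ i)^2) - (\<Sum>i\<in>UNIV. \<Sum>k\<in>UNIV. (if (k::'p) = i then 1 else 0))"
    by (simp only: sum_subtractf)
  also have "(\<Sum>i\<in>UNIV. \<Sum>k\<in>UNIV. (if (k::'p) = i then 1 else (0::real))) = real CARD('p)"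
    by simp
  also have "(\<Sum>i\<in>UNIV. \<Sum>k\<in>UNIV. (O' $ k $ i)^2) = trace (O' ** O')"
    unfolding trace_def matrix_matrix_mult_def by (simp add: power2_eq_square s)
  finally show ?thesis .
qed

lemma cov_props:
  fixes X :: "'a \<Rightarrow> real^'p"
  assumes P: "prob_space M" and mX: "X \<in> borel_measurable M"
    and i4: "\<forall>i. integrable M (\<lambda>w. (X w $ i) ^ 4)"
  shows "0 \<le> v \<bullet> (cov_mat M X *v v)" and "transpose (cov_mat M X) = cov_mat M X"
proof -
  interpret prob_space M by fact
  define m where "m = mean_vec M X"
  define Y where "Y i w = X w $ i - m $ i" for i w
  have mXi: "(\<lambda>w. X w $ i) \<in> borel_measurable M" for i
    by (rule measurable_compose[OF mX borel_measurable_nth])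
  have i2: "integrable M (\<lambda>w. (X w $ i)^2)" for i
  proof -
    have i1: "integrable M (\<lambda>w. 1 + (X w $ i)^4)" using i4 by simp
    have nb: "(X w $ i)^2 \<le> 1 + (X w $ i)^4" for w
    proof -
      have h: "0 \<le> ((X w $ i)^2 - 1)^2" by simp
      have e: "((X w $ i)^2 - 1)^2 = (X w $ i)^4 - 2 * (X w $ i)^2 + 1"
        by (simp add: power2_diff power_mult[symmetric])
      have z: "0 \<le> (X w $ i)^2" by simp
      show "(X w $ i)^2 \<le> 1 + (X w $ i)^4" using h e z by linarith
    qed
    have m2: "(\<lambda>w. (X w $ i)^2) \<in> borel_measurable M" using mXi[of i] by measurable
    show ?thesis
      by (rule Bochner_Integration.integrable_bound[OF i1 m2]) (auto intro!: AE_I2 simp: nb)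
  qed
  have i1: "integrable M (\<lambda>w. X w $ i)" for i
    using sq_integrable_imp[OF P mXi i2] .
  have mY: "(\<lambda>w. Y i w) \<in> borel_measurable M" for i
    unfolding Y_def using mXi by simp
  have iY2: "integrable M (\<lambda>w. (Y i w)^2)" for i
    unfolding Y_def power2_diff
    apply (rule Bochner_Integration.integrable_diff)
     apply (rule Bochner_Integration.integrable_add)
      apply (rule i2)
     apply (rule integrable_const)
    apply (rule integrable_mult_left)
    apply (rule integrable_mult_right)
    apply (rule i1)
    done
  have iYY: "integrable M (\<lambda>w. Y i w * Y j w)" for i j
  proof -
    have ii: "integrable M (\<lambda>w. (Y i w)^2 + (Y j w)^2)"
      by (rule Bochner_Integration.integrable_add[OF iY2 iY2])
    have nb: "\<bar>Y i w * Y j w\<bar> \<le> (Y i w)^2 + (Y j w)^2" for w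
    proof -
      have "0 \<le> (\<bar>Y i w\<bar> - \<bar>Y j w\<bar>)^2" by simp
      then have "2 * (\<bar>Y i w\<bar> * \<bar>Y j w\<bar>) \<le> (Y i w)^2 + (Y j w)^2"
        by (simp add: power2_diff power2_abs)
      moreover have "0 \<le> \<bar>Y i w\<bar> * \<bar>Y j w\<bar>" by simp
      ultimately show ?thesis unfolding abs_mult by linarith
    qed
    have mm: "(\<lambda>w. Y i w * Y j w) \<in> borel_measurable M"
      by (intro borel_measurable_times mY)
    show ?thesis
      by (rule Bochner_Integration.integrable_bound[OF ii mm]) (auto intro!: AE_I2 simp: nb)
  qed
  have cij: "cov_mat M X $ i $ j = integral\<^sup>L M (\<lambda>w. Y i w * Y j w)" for i j
    unfolding cov_mat_def Y_def m_def by simp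
  show "transpose (cov_mat M X) = cov_mat M X"
    by (simp add: vec_eq_iff transpose_def cij mult.commute)
  have "v \<bullet> (cov_mat M X *v v) = (\<Sum>i\<in>UNIV. \<Sum>j\<in>UNIV. integral\<^sup>L M (\<lambda>w. v $ i * v $ j * (Y i w * Y j w)))"
    unfolding inner_vec_def matrix_vector_mult_def
    by (simp add: cij sum_distrib_left ac_simps)
  also have "\<dots> = integral\<^sup>L M (\<lambda>w. \<Sum>i\<in>UNIV. \<Sum>j\<in>UNIV. v $ i * v $ j * (Y i w * Y j w))"
    using iYY by (simp add: Bochner_Integration.integral_sum Bochner_Integration.integrable_sum)
  also have "\<dots> = integral\<^sup>L M (\<lambda>w. (\<Sum>i\<in>UNIV. v $ i * Y i w)^2)"
    by (simp add: power2_eq_square sum_product mult.assoc mult.left_commute)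
  also have "\<dots> \<ge> 0" by (rule Bochner_Integration.integral_nonneg) simp
  finally show "0 \<le> v \<bullet> (cov_mat M X *v v)" .
qed

lemma quad_min:
  fixes V T p \<rho> :: real
  assumes V: "V \<ge> 0" and T: "T \<ge> 0" and p: "p > 0"
  shows "((1 - V / (V + T))^2 * V + (V / (V + T))^2 * T) / p \<le> ((1 - \<rho>)^2 * V + \<rho>^2 * T) / p"
    and "V + T \<noteq> 0 \<Longrightarrow> ((1 - \<rho>)^2 * V + \<rho>^2 * T) / p = ((1 - V / (V + T))^2 * V + (V / (V + T))^2 * T) / p
         \<Longrightarrow> \<rho> = V / (V + T)"
proof -
  have key: "(1 - x)^2 * V + x^2 * T = (V + T) * (x - V / (V + T))^2 + V * T / (V + T)" if S: "V + T > 0" for x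
  proof -
    have e1: "x - V / (V + T) = ((V + T) * x - V) / (V + T)" using S by (simp add: field_simps)
    have "(V + T) * ((V + T) * (x - V / (V + T))^2) = (V + T) * ((V + T) * (((V + T) * x - V)^2 / (V + T)^2))"
      unfolding e1 power_divide ..
    also have "\<dots> = ((V + T) * x - V)^2" using S by (simp add: power2_eq_square)
    finally have "(V + T) * ((V + T) * (x - V / (V + T))^2) = ((V + T) * x - V)^2" .
    then have "(V + T) * ((V + T) * (x - V / (V + T))^2 + V * T / (V + T)) = ((V + T) * x - V)^2 + V * T"
      using S by (simp add: distrib_left)
    also have "\<dots> = (V + T) * ((1 - x)^2 * V + x^2 * T)"
      by (simp add: power2_eq_square algebra_simps)
    finally show ?thesis using S by simp
  qed
  show "((1 - V / (V + T))^2 * V + (V / (V + T))^2 * T) / p \<le> ((1 - \<rho>)^2 * V + \<rho>^2 * T) / p"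
  proof (cases "V + T = 0")
    case True
    then have "V = 0" "T = 0" using V T by auto
    then show ?thesis by simp
  next
    case False
    then have S: "V + T > 0" using V T by simp
    have n: "(V + T) * (V / (V + T) - V / (V + T))^2 + V * T / (V + T) \<le> (V + T) * (\<rho> - V / (V + T))^2 + V * T / (V + T)"
      using S by simp
    show ?thesis unfolding key[OF S] by (rule divide_right_mono[OF n]) (simp add: p less_imp_le)
  qed
  assume ne: "V + T \<noteq> 0"
  then have S: "V + T > 0" using V T by simp
  assume eq: "((1 - \<rho>)^2 * V + \<rho>^2 * T) / p = ((1 - V / (V + T))^2 * V + (V / (V + T))^2 * T) / p"
  then have "(1 - \<rho>)^2 * V + \<rho>^2 * T = (1 - V / (V + T))^2 * V + (V / (V + T))^2 * T"
    using p by simp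
  then have "(V + T) * (\<rho> - V / (V + T))^2 = 0" unfolding key[OF S] by simp
  then show "\<rho> = V / (V + T)" using S by simp
qed

lemma final_abs:
  fixes F :: "'a \<Rightarrow> real^'p^'p" and Om :: "real^'p^'p" and lam :: "'p \<Rightarrow> real"
  assumes P: "prob_space M"
    and m: "\<And>i j. (\<lambda>w. F w $ i $ j) \<in> borel_measurable M"
    and sq: "\<And>i j. integrable M (\<lambda>w. (F w $ i $ j)^2)"
    and mean: "\<And>i j. integral\<^sup>L M (\<lambda>w. F w $ i $ j) = Om $ i $ j"
    and symO: "transpose Om = Om" and dO: "\<And>i. Om $ i $ i = 1"
    and cp: "charpoly Om = (\<Prod>i\<in>UNIV. [: - lam i, 1 :])"
  shows "(\<forall>\<rho>::real.
            integral\<^sup>L M (\<lambda>w. fro2 ((1 - trace (cov_mat M (\<lambda>w. vecm (F w)))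
                 / (trace (cov_mat M (\<lambda>w. vecm (F w)))
                    + trace (Om ** Om) - real CARD('p)))
                 *\<^sub>R F w
               + (trace (cov_mat M (\<lambda>w. vecm (F w)))
                 / (trace (cov_mat M (\<lambda>w. vecm (F w)))
                    + trace (Om ** Om) - real CARD('p)))
                 *\<^sub>R mat 1
               - Om))
            \<le> integral\<^sup>L M (\<lambda>w. fro2 ((1 - \<rho>) *\<^sub>R F w + \<rho> *\<^sub>R mat 1
                                     - Om)))
         \<and> (trace (cov_mat M (\<lambda>w. vecm (F w)))
              + trace (Om ** Om) - real CARD('p) \<noteq> 0
            \<longrightarrow> (\<forall>\<rho>::real.
                 integral\<^sup>L M (\<lambda>w. fro2 ((1 - \<rho>) *\<^sub>R F w + \<rho> *\<^sub>R mat 1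
                                     - Om))
                 = integral\<^sup>L M (\<lambda>w. fro2 ((1 - trace (cov_mat M (\<lambda>w. vecm (F w)))
                 / (trace (cov_mat M (\<lambda>w. vecm (F w)))
                    + trace (Om ** Om) - real CARD('p)))
                 *\<^sub>R F w
               + (trace (cov_mat M (\<lambda>w. vecm (F w)))
                 / (trace (cov_mat M (\<lambda>w. vecm (F w)))
                    + trace (Om ** Om) - real CARD('p)))
                 *\<^sub>R mat 1
               - Om))
                 \<longrightarrow> \<rho> = trace (cov_mat M (\<lambda>w. vecm (F w)))
                 / (trace (cov_mat M (\<lambda>w. vecm (F w)))
                    + trace (Om ** Om) - real CARD('p))))
         \<and> trace (cov_mat M (\<lambda>w. vecm (F w)))
             / (trace (cov_mat M (\<lambda>w. vecm (F w)))
                + trace (Om ** Om) - real CARD('p))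
           = trace (cov_mat M (\<lambda>w. vecm (F w)))
             / (trace (cov_mat M (\<lambda>w. vecm (F w)))
                + (\<Sum>i\<in>UNIV. (lam i)^2) - real CARD('p))"
proof -
  interpret prob_space M by fact
  define V where "V = trace (cov_mat M (\<lambda>w. vecm (F w)))"
  define T where "T = (\<Sum>i\<in>UNIV. \<Sum>k\<in>UNIV. ((mat 1 - Om) $ k $ i)^2)"
  define p where "p = real CARD('p)"
  have Eq: "integral\<^sup>L M (\<lambda>w. fro2 ((1 - \<rho>) *\<^sub>R F w + \<rho> *\<^sub>R mat 1 - Om))
     = ((1 - \<rho>)^2 * V + \<rho>^2 * T) / p" for \<rho>
    unfolding V_def T_def p_def by (rule exp_fro[OF P m sq mean])
  have Teq: "trace (Om ** Om) = T + p" unfolding T_def p_def using T_eq[OF symO dO] by simp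
  have lsq: "(\<Sum>i\<in>UNIV. (lam i)^2) = T + p" using sum_sq_eigen[OF cp] Teq by simp
  have V0: "V \<ge> 0" unfolding V_def trace_cov_vecm[of M F Om, OF mean]
    by (intro sum_nonneg Bochner_Integration.integral_nonneg) simp
  have T0: "T \<ge> 0" unfolding T_def by (intro sum_nonneg) simp
  have p0: "p > 0" unfolding p_def by simp
  have d: "V + (T + p) - p = V + T" by simp
  show ?thesis
    unfolding V_def[symmetric] p_def[symmetric] Eq Teq lsq d
    using quad_min[OF V0 T0 p0] by blast
qed

theorem theorem2:
  fixes M :: "'a measure" and X :: "'a \<Rightarrow> real^'p" and Xs :: "nat \<Rightarrow> 'a \<Rightarrow> real^'p"
    and n :: nat and lam :: "'p \<Rightarrow> real"
  assumes "prob_space M"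
    and "X \<in> borel_measurable M"
    and "\<forall>i. integrable M (\<lambda>w. (X w $ i) ^ 4)"
    and "invertible (cov_mat M X)"
    and "\<forall>k\<in>{1..n}. Xs k \<in> borel_measurable M \<and> distr M borel (Xs k) = distr M borel X"
    and "prob_space.indep_vars M (\<lambda>_. borel) Xs {1..n}"
    and "\<forall>w\<in>space M. invertible (sample_cov n Xs w)"
    and "\<forall>j k. integrable M (\<lambda>w. (norm_inv_cov (sample_cov n Xs w) $ j $ k) ^ 2)"
    and "\<forall>j k. integral\<^sup>L M (\<lambda>w. norm_inv_cov (sample_cov n Xs w) $ j $ k)
               = norm_inv_cov (cov_mat M X) $ j $ k"
    and "charpoly (norm_inv_cov (cov_mat M X)) = (\<Prod>i\<in>UNIV. [: - lam i, 1 :])"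
  shows "(\<forall>\<rho>::real.
            integral\<^sup>L M (\<lambda>w. fro2 ((1 - trace (cov_mat M (\<lambda>w. vecm (norm_inv_cov (sample_cov n Xs w))))
                 / (trace (cov_mat M (\<lambda>w. vecm (norm_inv_cov (sample_cov n Xs w))))
                    + trace (norm_inv_cov (cov_mat M X) ** norm_inv_cov (cov_mat M X)) - real CARD('p)))
                 *\<^sub>R norm_inv_cov (sample_cov n Xs w)
               + (trace (cov_mat M (\<lambda>w. vecm (norm_inv_cov (sample_cov n Xs w))))
                 / (trace (cov_mat M (\<lambda>w. vecm (norm_inv_cov (sample_cov n Xs w))))
                    + trace (norm_inv_cov (cov_mat M X) ** norm_inv_cov (cov_mat M X)) - real CARD('p)))
                 *\<^sub>R mat 1
               - norm_inv_cov (cov_mat M X)))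
            \<le> integral\<^sup>L M (\<lambda>w. fro2 ((1 - \<rho>) *\<^sub>R norm_inv_cov (sample_cov n Xs w) + \<rho> *\<^sub>R mat 1
                                     - norm_inv_cov (cov_mat M X))))
         \<and> (trace (cov_mat M (\<lambda>w. vecm (norm_inv_cov (sample_cov n Xs w))))
              + trace (norm_inv_cov (cov_mat M X) ** norm_inv_cov (cov_mat M X)) - real CARD('p) \<noteq> 0
            \<longrightarrow> (\<forall>\<rho>::real.
                 integral\<^sup>L M (\<lambda>w. fro2 ((1 - \<rho>) *\<^sub>R norm_inv_cov (sample_cov n Xs w) + \<rho> *\<^sub>R mat 1
                                     - norm_inv_cov (cov_mat M X)))
                 = integral\<^sup>L M (\<lambda>w. fro2 ((1 - trace (cov_mat M (\<lambda>w. vecm (norm_inv_cov (sample_cov n Xs w))))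
                 / (trace (cov_mat M (\<lambda>w. vecm (norm_inv_cov (sample_cov n Xs w))))
                    + trace (norm_inv_cov (cov_mat M X) ** norm_inv_cov (cov_mat M X)) - real CARD('p)))
                 *\<^sub>R norm_inv_cov (sample_cov n Xs w)
               + (trace (cov_mat M (\<lambda>w. vecm (norm_inv_cov (sample_cov n Xs w))))
                 / (trace (cov_mat M (\<lambda>w. vecm (norm_inv_cov (sample_cov n Xs w))))
                    + trace (norm_inv_cov (cov_mat M X) ** norm_inv_cov (cov_mat M X)) - real CARD('p)))
                 *\<^sub>R mat 1
               - norm_inv_cov (cov_mat M X)))
                 \<longrightarrow> \<rho> = trace (cov_mat M (\<lambda>w. vecm (norm_inv_cov (sample_cov n Xs w))))
                 / (trace (cov_mat M (\<lambda>w. vecm (norm_inv_cov (sample_cov n Xs w))))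
                    + trace (norm_inv_cov (cov_mat M X) ** norm_inv_cov (cov_mat M X)) - real CARD('p))))
         \<and> trace (cov_mat M (\<lambda>w. vecm (norm_inv_cov (sample_cov n Xs w))))
             / (trace (cov_mat M (\<lambda>w. vecm (norm_inv_cov (sample_cov n Xs w))))
                + trace (norm_inv_cov (cov_mat M X) ** norm_inv_cov (cov_mat M X)) - real CARD('p))
           = trace (cov_mat M (\<lambda>w. vecm (norm_inv_cov (sample_cov n Xs w))))
             / (trace (cov_mat M (\<lambda>w. vecm (norm_inv_cov (sample_cov n Xs w))))
                + (\<Sum>i\<in>UNIV. (lam i)^2) - real CARD('p))"
  proof -
  have mX: "\<forall>k\<in>{1..n}. Xs k \<in> borel_measurable M" using assms(5) by blast
  have mA: "\<And>i j. (\<lambda>w. norm_inv_cov (sample_cov n Xs w) $ i $ j) \<in> borel_measurable M"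
    by (rule nic_measurable) (auto intro: sample_cov_measurable[OF mX] simp: assms(7))
  have psd: "\<And>v. 0 \<le> v \<bullet> (cov_mat M X *v v)"
    using cov_props(1)[OF assms(1) assms(2) assms(3)] .
  have sym: "transpose (cov_mat M X) = cov_mat M X"
    using cov_props(2)[OF assms(1) assms(2) assms(3)] .
  have symO: "transpose (norm_inv_cov (cov_mat M X)) = norm_inv_cov (cov_mat M X)"
    using nic_props(1)[OF sym psd assms(4)] .
  have dO: "\<And>i. norm_inv_cov (cov_mat M X) $ i $ i = 1"
    using nic_props(2)[OF sym psd assms(4)] .
  show ?thesis
    apply (rule final_abs[of M "\<lambda>w. norm_inv_cov (sample_cov n Xs w)" "norm_inv_cov (cov_mat M X)" lam])
    using assms(1) mA assms(8) assms(9) symO dO assms(10) by auto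
qed

end
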